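(* Let $G=G_n$ be a sequence of graphs on $n$ vertices that are $(\varepsilon_n,2)$-quasirandom with $\varepsilon_n=o(1)$, with density $\gamma=d(G)$ satisfying $\gamma=\Omega(1)$ and $1-\gamma=\Omega(1)$. Let $X,Y,Z$ be sets of ordered pairs of distinct vertices of $G$, where within each of $X$, $Y$, $Z$ the pairs are pairwise disjoint, and suppose $|X|,|Y|,|Z|=\Omega(n)$. Then there are at least $\gamma^{3}|X||Y||Z|/8-o(n^{3})$ choices of $(x_1,x_2)\in X$, $(y_1,y_2)\in Y$, $(z_1,z_2)\in Z$ such that $\{x_1,y_2\}$, $\{y_1,z_2\}$ and $\{z_1,x_2\}$ are all edges of $G$.
   Context: For a graph $G$ with $n$ vertices and $m$ edges, $d(G)=m/\binom n2$, and $G$ is $(\varepsilon,h)$-quasirandom if every set $A$ of at most $h$ vertices satisfies $\left|\bigcap_{w\in A}N_G(w)\right|=(1\pm\varepsilon)d(G)^{|A|}n$, where $x=1\pm\varepsilon$ means $1-\varepsilon\le x\le1+\varepsilon$. Asymptotics are as $n\to\infty$. *)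

theory Defs
  imports Complex_Main
begin

definition simple_graph :: "nat \<Rightarrow> (nat \<Rightarrow> nat \<Rightarrow> bool) \<Rightarrow> bool" where
  "simple_graph n E \<longleftrightarrow> (\<forall>u v. E u v \<longrightarrow> E v u) \<and> (\<forall>u. \<not> E u u)
     \<and> (\<forall>u v. E u v \<longrightarrow> u < n \<and> v < n)"

definition edge_set :: "nat \<Rightarrow> (nat \<Rightarrow> nat \<Rightarrow> bool) \<Rightarrow> nat set set" where
  "edge_set n E = {{u, v} | u v. u < n \<and> v < n \<and> E u v}"

definition density :: "nat \<Rightarrow> (nat \<Rightarrow> nat \<Rightarrow> bool) \<Rightarrow> real" where
  "density n E = real (card (edge_set n E)) / real (n choose 2)"

text \<open>Common neighbourhood of a set A of vertices (whole vertex set if A is empty).\<close>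
definition common_nbhd :: "nat \<Rightarrow> (nat \<Rightarrow> nat \<Rightarrow> bool) \<Rightarrow> nat set \<Rightarrow> nat set" where
  "common_nbhd n E A = {v. v < n \<and> (\<forall>w\<in>A. E w v)}"

definition quasirandom :: "nat \<Rightarrow> (nat \<Rightarrow> nat \<Rightarrow> bool) \<Rightarrow> real \<Rightarrow> nat \<Rightarrow> bool" where
  "quasirandom n E eps h \<longleftrightarrow>
     (\<forall>A. A \<subseteq> {..<n} \<and> card A \<le> h \<longrightarrow>
        (1 - eps) * density n E ^ card A * real n \<le> real (card (common_nbhd n E A)) \<and>
        real (card (common_nbhd n E A)) \<le> (1 + eps) * density n E ^ card A * real n)"

definition disjoint_pairs :: "nat \<Rightarrow> (nat \<times> nat) set \<Rightarrow> bool" where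
  "disjoint_pairs n X \<longleftrightarrow> X \<subseteq> {..<n} \<times> {..<n} \<and> (\<forall>(a, b)\<in>X. a \<noteq> b) \<and>
     (\<forall>p\<in>X. \<forall>q\<in>X. p \<noteq> q \<longrightarrow> {fst p, snd p} \<inter> {fst q, snd q} = {})"

definition triangle_count ::
  "(nat \<Rightarrow> nat \<Rightarrow> bool) \<Rightarrow> (nat \<times> nat) set \<Rightarrow> (nat \<times> nat) set \<Rightarrow> (nat \<times> nat) set \<Rightarrow> nat" where
  "triangle_count E X Y Z = card {(x, y, z). x \<in> X \<and> y \<in> Y \<and> z \<in> Z \<and>
      E (fst x) (snd y) \<and> E (fst y) (snd z) \<and> E (fst z) (snd x)}"

end

theory Submission
  imports Defs
begin



definition ee :: "(nat\<Rightarrow>nat\<Rightarrow>bool) \<Rightarrow> nat \<Rightarrow> nat \<Rightarrow> real" where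
  "ee E u v = (if E u v then 1 else 0)"
definition dg :: "(nat\<Rightarrow>nat\<Rightarrow>bool) \<Rightarrow> nat \<Rightarrow> nat \<Rightarrow> real" where
  "dg E n a = (\<Sum>v<n. ee E a v)"
definition cdg :: "(nat\<Rightarrow>nat\<Rightarrow>bool) \<Rightarrow> nat \<Rightarrow> nat \<Rightarrow> nat \<Rightarrow> real" where
  "cdg E n a b = (\<Sum>v<n. ee E a v * ee E b v)"

lemma ee_ge0[simp]: "0 \<le> ee E u v" and ee_le1[simp]: "ee E u v \<le> 1"
  by (auto simp: ee_def)

lemma ee_sq[simp]: "ee E u v * ee E u v = ee E u v" by (simp add: ee_def)

lemma ee_sym: "\<forall>u v. E u v \<longrightarrow> E v u \<Longrightarrow> ee E u v = ee E v u"
  by (auto simp: ee_def)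

lemma dg_ge0: "0 \<le> dg E n a" by (simp add: dg_def sum_nonneg)
lemma dg_le: "dg E n a \<le> n"
proof -
  have "dg E n a \<le> (\<Sum>v<n. 1)" unfolding dg_def by (rule sum_mono) simp
  thus ?thesis by simp
qed
lemma cdg_diag: "cdg E n a a = dg E n a" by (simp add: cdg_def dg_def)
lemma cdg_ge0: "0 \<le> cdg E n a b" by (simp add: cdg_def sum_nonneg)
lemma cdg_le: "cdg E n a b \<le> n"
proof -
  have "cdg E n a b \<le> (\<Sum>v<n. 1)" unfolding cdg_def
    by (rule sum_mono) (simp add: mult_le_one)
  thus ?thesis by simp
qed

lemma amgm_abs: fixes d t :: real assumes "t > 0" shows "\<bar>d\<bar> \<le> t/2 + d^2/(2*t)"
proof -
  have "0 \<le> (\<bar>d\<bar> - t)^2" by simp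
  hence "2*t*\<bar>d\<bar> \<le> d^2 + t^2" by (simp add: power2_eq_square algebra_simps)
  thus ?thesis using assms by (simp add: field_simps power2_eq_square)
qed

lemma sum_abs_amgm:
  fixes f :: "'a \<Rightarrow> real" assumes "t > 0" and "finite A"
  shows "(\<Sum>x\<in>A. \<bar>f x\<bar>) \<le> real (card A) * t / 2 + (\<Sum>x\<in>A. (f x)^2) / (2*t)"
proof -
  have "(\<Sum>x\<in>A. \<bar>f x\<bar>) \<le> (\<Sum>x\<in>A. t/2 + (f x)^2/(2*t))"
    by (rule sum_mono) (rule amgm_abs[OF assms(1)])
  also have "\<dots> = real (card A) * t / 2 + (\<Sum>x\<in>A. (f x)^2) / (2*t)"
    by (simp add: sum.distrib sum_divide_distrib)
  finally show ?thesis .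
qed

lemma dp_facts:
  assumes "disjoint_pairs n X"
  shows "inj_on fst X" "inj_on snd X" "fst ` X \<subseteq> {..<n}" "snd ` X \<subseteq> {..<n}"
    "finite X" "card X \<le> n"
    "\<And>p q. p \<in> X \<Longrightarrow> q \<in> X \<Longrightarrow> p \<noteq> q \<Longrightarrow> fst p \<noteq> fst q \<and> snd p \<noteq> snd q"
proof -
  have sub: "X \<subseteq> {..<n} \<times> {..<n}" and dis: "\<forall>p\<in>X. \<forall>q\<in>X. p \<noteq> q \<longrightarrow> {fst p, snd p} \<inter> {fst q, snd q} = {}"
    using assms by (auto simp: disjoint_pairs_def)
  show D: "\<And>p q. p \<in> X \<Longrightarrow> q \<in> X \<Longrightarrow> p \<noteq> q \<Longrightarrow> fst p \<noteq> fst q \<and> snd p \<noteq> snd q"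
    using dis by blast
  show i1: "inj_on fst X" using D by (meson inj_onI)
  show "inj_on snd X" using D by (meson inj_onI)
  show "fst ` X \<subseteq> {..<n}" "snd ` X \<subseteq> {..<n}" using sub by auto
  show f: "finite X" using sub finite_subset by blast
  have "card X = card (fst ` X)" using i1 by (simp add: card_image)
  also have "\<dots> \<le> card {..<n}" using sub by (intro card_mono) auto
  finally show "card X \<le> n" by simp
qed

lemma sq_expand:
  fixes N :: "nat \<Rightarrow> real"
  shows "(\<Sum>u<n. (N u - c)^2) = (\<Sum>u<n. (N u)^2) - 2*c*(\<Sum>u<n. N u) + real n * c^2"
  by (simp add: power2_eq_square algebra_simps sum.distrib sum_subtractf sum_distrib_left)

lemma varA:
  fixes \<gamma> \<eta> :: real
  assumes sym: "\<forall>u v. E u v \<longrightarrow> E v u" and B: "B \<subseteq> {..<n}"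
    and g0: "0 \<le> \<gamma>" and g2: "\<gamma> \<le> 2" and e0: "0 \<le> \<eta>"
    and deg: "\<forall>a<n. \<bar>dg E n a - \<gamma> * n\<bar> \<le> \<eta> * n"
    and codeg: "\<forall>a<n. \<forall>b<n. a \<noteq> b \<longrightarrow> \<bar>cdg E n a b - \<gamma>^2 * n\<bar> \<le> \<eta> * n"
  shows "(\<Sum>u<n. ((\<Sum>a\<in>B. ee E a u) - \<gamma> * card B)^2) \<le> 5*\<eta>*real n^3 + real n^2"
proof -
  define N where "N u = (\<Sum>a\<in>B. ee E a u)" for u
  define b where "b = real (card B)"
  have fB: "finite B" using B finite_subset by blast
  have bn: "b \<le> n" unfolding b_def using card_mono[OF _ B] by simp
  have b0: "0 \<le> b" by (simp add: b_def)
  have S1: "(\<Sum>u<n. N u) = (\<Sum>a\<in>B. dg E n a)"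
    unfolding N_def dg_def using sum.swap[of "\<lambda>a u. ee E a u" B "{..<n}"]
    by (simp add: ee_sym[OF sym])
  have S2: "(\<Sum>u<n. (N u)^2) = (\<Sum>a\<in>B. \<Sum>a'\<in>B. cdg E n a a')"
  proof -
    have "(\<Sum>u<n. (N u)^2) = (\<Sum>u<n. \<Sum>a\<in>B. \<Sum>a'\<in>B. ee E a u * ee E a' u)"
      unfolding N_def by (simp add: power2_eq_square sum_product)
    also have "\<dots> = (\<Sum>a\<in>B. \<Sum>u<n. \<Sum>a'\<in>B. ee E a u * ee E a' u)" by (rule sum.swap)
    also have "\<dots> = (\<Sum>a\<in>B. \<Sum>a'\<in>B. \<Sum>u<n. ee E a u * ee E a' u)"
      by (rule sum.cong, simp, rule sum.swap)
    finally show ?thesis by (simp add: cdg_def)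
  qed
  have L1: "(\<Sum>u<n. N u) \<ge> b * ((\<gamma> - \<eta>) * n)"
  proof -
    have "(\<Sum>a\<in>B. dg E n a) \<ge> (\<Sum>a\<in>B. (\<gamma> - \<eta>) * n)"
      by (rule sum_mono) (use deg B in \<open>force simp: algebra_simps abs_le_iff\<close>)
    thus ?thesis using S1 by (simp add: b_def)
  qed
  have U2: "(\<Sum>u<n. (N u)^2) \<le> b*b*((\<gamma>^2 + \<eta>)*n) + b*n"
  proof -
    have "(\<Sum>a\<in>B. \<Sum>a'\<in>B. cdg E n a a') \<le> (\<Sum>a\<in>B. \<Sum>a'\<in>B. (\<gamma>^2 + \<eta>)*n + (if a = a' then real n else 0))"
    proof (intro sum_mono)
      fix a a' assume a: "a \<in> B" "a' \<in> B"
      show "cdg E n a a' \<le> (\<gamma>^2 + \<eta>)*n + (if a = a' then real n else 0)"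
      proof (cases "a = a'")
        case True
        have "0 \<le> (\<gamma>^2 + \<eta>) * real n" using e0 by simp
        thus ?thesis using cdg_le[of E n a a'] True by simp
      next
        case False
        have "a < n" "a' < n" using a B by auto
        hence "\<bar>cdg E n a a' - \<gamma>^2 * n\<bar> \<le> \<eta> * n" using codeg False by blast
        thus ?thesis using False by (simp add: algebra_simps abs_le_iff)
      qed
    qed
    also have "\<dots> = b*b*((\<gamma>^2 + \<eta>)*n) + b*n"
      using fB by (simp add: sum.distrib b_def algebra_simps)
    finally show ?thesis using S2 by simp
  qed
  have "(\<Sum>u<n. (N u - \<gamma>*b)^2) = (\<Sum>u<n. (N u)^2) - 2*(\<gamma>*b)*(\<Sum>u<n. N u) + real n * (\<gamma>*b)^2"
    by (rule sq_expand)
  also have "\<dots> \<le> b*b*((\<gamma>^2 + \<eta>)*n) + b*n - 2*(\<gamma>*b)*(b * ((\<gamma> - \<eta>) * n)) + real n * (\<gamma>*b)^2"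
    using U2 L1 mult_left_mono[OF L1, of "2*(\<gamma>*b)"] g0 b0 by simp
  also have "\<dots> = b*b*\<eta>*n*(1+2*\<gamma>) + b*n" by (simp add: algebra_simps power2_eq_square)
  also have "\<dots> \<le> real n*real n*\<eta>*n*5 + real n*n"
  proof -
    have "b*b \<le> real n * real n" using bn b0 by (simp add: mult_mono)
    hence "b*b*(\<eta>*n*(1+2*\<gamma>)) \<le> real n*real n*(\<eta>*n*(1+2*\<gamma>))"
      by (rule mult_right_mono) (use e0 g0 in simp)
    also have "\<dots> \<le> real n*real n*(\<eta>*n*5)"
      by (rule mult_left_mono) (use e0 g2 in \<open>auto intro!: mult_left_mono\<close>)
    finally have "b*b*(\<eta>*n*(1+2*\<gamma>)) \<le> real n*real n*(\<eta>*n*5)" .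
    moreover have "b*n \<le> real n * n" using bn by (simp add: mult_right_mono)
    ultimately show ?thesis by (simp add: algebra_simps)
  qed
  finally show ?thesis by (simp add: N_def b_def power3_eq_cube power2_eq_square algebra_simps)
qed

lemma swap3: "(\<Sum>u\<in>U. \<Sum>v\<in>V. \<Sum>w\<in>W. f u v w) = (\<Sum>w\<in>W. \<Sum>u\<in>U. \<Sum>v\<in>V. f u v w)"
proof -
  have "(\<Sum>u\<in>U. \<Sum>v\<in>V. \<Sum>w\<in>W. f u v w) = (\<Sum>u\<in>U. \<Sum>w\<in>W. \<Sum>v\<in>V. f u v w)"
    by (rule sum.cong, simp, rule sum.swap)
  also have "\<dots> = (\<Sum>w\<in>W. \<Sum>u\<in>U. \<Sum>v\<in>V. f u v w)" by (rule sum.swap)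
  finally show ?thesis .
qed

lemma prod_close:
  fixes a b p q e m P :: real
  assumes "\<bar>a - p\<bar> \<le> e" "\<bar>b - q\<bar> \<le> e" "\<bar>b\<bar> \<le> m" "\<bar>p\<bar> \<le> P"
  shows "\<bar>a*b - p*q\<bar> \<le> e*m + P*e"
proof -
  have "a*b - p*q = (a-p)*b + p*(b-q)" by (simp add: algebra_simps)
  hence "\<bar>a*b - p*q\<bar> \<le> \<bar>a-p\<bar>*\<bar>b\<bar> + \<bar>p\<bar>*\<bar>b-q\<bar>" by (simp add: abs_mult[symmetric] abs_triangle_ineq)
  also have "\<dots> \<le> e*m + P*e"
    using assms by (intro add_mono mult_mono) auto
  finally show ?thesis .
qed

lemma sq_expand2:
  fixes T :: "nat \<Rightarrow> nat \<Rightarrow> real"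
  shows "(\<Sum>u<n. \<Sum>v<n. (T u v - c)^2) = (\<Sum>u<n. \<Sum>v<n. (T u v)^2) - 2*c*(\<Sum>u<n. \<Sum>v<n. T u v) + real n * real n * c^2"
  by (simp add: sq_expand sum.distrib sum_subtractf sum_distrib_left)

lemma varT:
  fixes \<gamma> \<eta> :: real
  assumes sym: "\<forall>u v. E u v \<longrightarrow> E v u" and Z: "disjoint_pairs n Z"
    and g0: "0 \<le> \<gamma>" and g2: "\<gamma> \<le> 2" and e0: "0 \<le> \<eta>"
    and deg: "\<forall>a<n. \<bar>dg E n a - \<gamma> * n\<bar> \<le> \<eta> * n"
    and codeg: "\<forall>a<n. \<forall>b<n. a \<noteq> b \<longrightarrow> \<bar>cdg E n a b - \<gamma>^2 * n\<bar> \<le> \<eta> * n"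
  shows "(\<Sum>u<n. \<Sum>v<n. ((\<Sum>z\<in>Z. ee E u (snd z) * ee E v (fst z)) - \<gamma>^2 * card Z)^2)
           \<le> 29*\<eta>*real n^4 + real n^3"
proof -
  define T where "T u v = (\<Sum>z\<in>Z. ee E u (snd z) * ee E v (fst z))" for u v
  define c where "c = real (card Z)"
  note dp = dp_facts[OF Z]
  have cn: "c \<le> n" unfolding c_def using dp by simp
  have c0: "0 \<le> c" by (simp add: c_def)
  have S1: "(\<Sum>u<n. \<Sum>v<n. T u v) = (\<Sum>z\<in>Z. dg E n (snd z) * dg E n (fst z))"
  proof -
    have "(\<Sum>u<n. \<Sum>v<n. T u v) = (\<Sum>z\<in>Z. \<Sum>u<n. \<Sum>v<n. ee E u (snd z) * ee E v (fst z))"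
      unfolding T_def by (rule swap3)
    also have "\<dots> = (\<Sum>z\<in>Z. dg E n (snd z) * dg E n (fst z))"
      by (simp add: dg_def sum_product ee_sym[OF sym])
    finally show ?thesis .
  qed
  have S2: "(\<Sum>u<n. \<Sum>v<n. (T u v)^2) = (\<Sum>z\<in>Z. \<Sum>z'\<in>Z. cdg E n (snd z) (snd z') * cdg E n (fst z) (fst z'))"
  proof -
    have "(\<Sum>u<n. \<Sum>v<n. (T u v)^2) = (\<Sum>u<n. \<Sum>v<n. \<Sum>z\<in>Z. \<Sum>z'\<in>Z.
        (ee E u (snd z) * ee E v (fst z)) * (ee E u (snd z') * ee E v (fst z')))"
      unfolding T_def by (simp add: power2_eq_square sum_product)
    also have "\<dots> = (\<Sum>z\<in>Z. \<Sum>u<n. \<Sum>v<n. \<Sum>z'\<in>Z.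
        (ee E u (snd z) * ee E v (fst z)) * (ee E u (snd z') * ee E v (fst z')))" by (rule swap3)
    also have "\<dots> = (\<Sum>z\<in>Z. \<Sum>z'\<in>Z. \<Sum>u<n. \<Sum>v<n.
        (ee E u (snd z) * ee E v (fst z)) * (ee E u (snd z') * ee E v (fst z')))"
      by (rule sum.cong, simp, rule swap3)
    also have "\<dots> = (\<Sum>z\<in>Z. \<Sum>z'\<in>Z. (\<Sum>u<n. ee E u (snd z) * ee E u (snd z')) * (\<Sum>v<n. ee E v (fst z) * ee E v (fst z')))"
    proof (intro sum.cong refl)
      fix z z'
      have "(\<Sum>u<n. \<Sum>v<n. (ee E u (snd z) * ee E v (fst z)) * (ee E u (snd z') * ee E v (fst z')))
          = (\<Sum>u<n. \<Sum>v<n. (ee E u (snd z) * ee E u (snd z')) * (ee E v (fst z) * ee E v (fst z')))"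
        by (simp add: mult_ac)
      also have "\<dots> = (\<Sum>u<n. ee E u (snd z) * ee E u (snd z')) * (\<Sum>v<n. ee E v (fst z) * ee E v (fst z'))"
        by (simp add: sum_product)
      finally show "(\<Sum>u<n. \<Sum>v<n. (ee E u (snd z) * ee E v (fst z)) * (ee E u (snd z') * ee E v (fst z')))
          = (\<Sum>u<n. ee E u (snd z) * ee E u (snd z')) * (\<Sum>v<n. ee E v (fst z) * ee E v (fst z'))" .
    qed
    finally show ?thesis by (simp add: cdg_def ee_sym[OF sym])
  qed
  have L1: "(\<Sum>u<n. \<Sum>v<n. T u v) \<ge> c * (\<gamma>^2*n*n - 3*\<eta>*n*n)"
  proof -
    have "(\<Sum>z\<in>Z. dg E n (snd z) * dg E n (fst z)) \<ge> (\<Sum>z\<in>Z. \<gamma>^2*n*n - 3*\<eta>*n*n)"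
    proof (rule sum_mono)
      fix z assume z: "z \<in> Z"
      hence zn: "snd z < n" "fst z < n" using dp by auto
      have "\<bar>dg E n (snd z) * dg E n (fst z) - (\<gamma>*n)*(\<gamma>*n)\<bar> \<le> (\<eta>*n)*n + (2*n)*(\<eta>*n)"
        apply (rule prod_close)
        using deg zn dg_le[of E n "fst z"] dg_ge0[of E n "fst z"] g0 g2 by (auto intro: mult_right_mono)
      thus "\<gamma>^2*n*n - 3*\<eta>*n*n \<le> dg E n (snd z) * dg E n (fst z)"
        by (simp add: abs_le_iff algebra_simps power2_eq_square)
    qed
    thus ?thesis using S1 by (simp add: c_def)
  qed
  have U2: "(\<Sum>u<n. \<Sum>v<n. (T u v)^2) \<le> c*c*(\<gamma>^4*n*n + 5*\<eta>*n*n) + c*(n*n)"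
  proof -
    have "(\<Sum>z\<in>Z. \<Sum>z'\<in>Z. cdg E n (snd z) (snd z') * cdg E n (fst z) (fst z'))
       \<le> (\<Sum>z\<in>Z. \<Sum>z'\<in>Z. (\<gamma>^4*n*n + 5*\<eta>*n*n) + (if z = z' then real n * n else 0))"
    proof (intro sum_mono)
      fix z z' assume zz: "z \<in> Z" "z' \<in> Z"
      show "cdg E n (snd z) (snd z') * cdg E n (fst z) (fst z') \<le> (\<gamma>^4*n*n + 5*\<eta>*n*n) + (if z = z' then real n * n else 0)"
      proof (cases "z = z'")
        case True
        have "cdg E n (snd z) (snd z') * cdg E n (fst z) (fst z') \<le> real n * n"
          by (intro mult_mono cdg_le cdg_ge0) auto
        moreover have "0 \<le> \<gamma>^4*n*n + 5*\<eta>*n*n" using e0 by simp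
        ultimately show ?thesis using True by simp
      next
        case False
        have ne: "snd z \<noteq> snd z'" "fst z \<noteq> fst z'" using dp(7)[OF zz False] by auto
        have lt: "snd z < n" "snd z' < n" "fst z < n" "fst z' < n" using dp zz by auto
        have "\<bar>cdg E n (snd z) (snd z') * cdg E n (fst z) (fst z') - (\<gamma>^2*n)*(\<gamma>^2*n)\<bar> \<le> (\<eta>*n)*n + (4*n)*(\<eta>*n)"
        proof (rule prod_close)
          show "\<bar>cdg E n (snd z) (snd z') - \<gamma>^2*n\<bar> \<le> \<eta>*n" using codeg ne lt by blast
          show "\<bar>cdg E n (fst z) (fst z') - \<gamma>^2*n\<bar> \<le> \<eta>*n" using codeg ne lt by blast
          show "\<bar>cdg E n (fst z) (fst z')\<bar> \<le> n" using cdg_le cdg_ge0 by (simp add: abs_le_iff)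
          have "\<gamma>^2 \<le> 2^2" using g0 g2 by (intro power_mono) auto
          thus "\<bar>\<gamma>^2*n\<bar> \<le> 4*n" by (simp add: abs_mult mult_right_mono)
        qed
        thus ?thesis using False by (simp add: abs_le_iff algebra_simps power2_eq_square power4_eq_xxxx)
      qed
    qed
    also have "\<dots> = c*c*(\<gamma>^4*n*n + 5*\<eta>*n*n) + c*(n*n)"
      using dp by (simp add: sum.distrib c_def algebra_simps)
    finally show ?thesis using S2 by simp
  qed
  have "(\<Sum>u<n. \<Sum>v<n. (T u v - \<gamma>^2*c)^2) = (\<Sum>u<n. \<Sum>v<n. (T u v)^2) - 2*(\<gamma>^2*c)*(\<Sum>u<n. \<Sum>v<n. T u v) + real n * real n * (\<gamma>^2*c)^2"
    by (rule sq_expand2)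
  also have "\<dots> \<le> c*c*(\<gamma>^4*n*n + 5*\<eta>*n*n) + c*(n*n) - 2*(\<gamma>^2*c)*(c * (\<gamma>^2*n*n - 3*\<eta>*n*n)) + real n * real n * (\<gamma>^2*c)^2"
    using U2 mult_left_mono[OF L1, of "2*(\<gamma>^2*c)"] c0 by simp
  also have "\<dots> = c*c*\<eta>*n*n*(5 + 6*\<gamma>^2) + c*n*n" by (simp add: algebra_simps power2_eq_square power4_eq_xxxx)
  also have "\<dots> \<le> real n*real n*\<eta>*n*n*29 + real n*n*n"
  proof -
    have g4: "\<gamma>^2 \<le> 4" using g0 g2 power_mono[of \<gamma> 2 2] by simp
    have "c*c \<le> real n * real n" using cn c0 by (simp add: mult_mono)
    hence "c*c*(\<eta>*n*n*(5 + 6*\<gamma>^2)) \<le> real n*real n*(\<eta>*n*n*(5 + 6*\<gamma>^2))"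
      by (rule mult_right_mono) (use e0 in simp)
    also have "\<dots> \<le> real n*real n*(\<eta>*n*n*29)"
      by (rule mult_left_mono) (use e0 g4 in \<open>auto intro!: mult_left_mono\<close>)
    finally have "c*c*(\<eta>*n*n*(5 + 6*\<gamma>^2)) \<le> real n*real n*(\<eta>*n*n*29)" .
    moreover have "c*n*n \<le> real n * n * n" using cn by (simp add: mult_right_mono)
    ultimately show ?thesis by (simp add: algebra_simps)
  qed
  finally show ?thesis by (simp add: T_def c_def power3_eq_cube power4_eq_xxxx algebra_simps)
qed

lemma count_sum:
  assumes "finite X" "finite Y" "finite Z"
  shows "real (triangle_count E X Y Z) = (\<Sum>x\<in>X. \<Sum>y\<in>Y. \<Sum>z\<in>Z.
     ee E (fst x) (snd y) * ee E (fst y) (snd z) * ee E (fst z) (snd x))"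
proof -
  define P where "P = (\<lambda>(x::nat\<times>nat, y::nat\<times>nat, z::nat\<times>nat). E (fst x) (snd y) \<and> E (fst y) (snd z) \<and> E (fst z) (snd x))"
  have S: "{(x, y, z). x \<in> X \<and> y \<in> Y \<and> z \<in> Z \<and>
      E (fst x) (snd y) \<and> E (fst y) (snd z) \<and> E (fst z) (snd x)} = {p \<in> X \<times> Y \<times> Z. P p}"
    by (auto simp: P_def)
  have fin: "finite (X \<times> Y \<times> Z)" using assms by simp
  have "real (triangle_count E X Y Z) = real (card {p \<in> X \<times> Y \<times> Z. P p})"
    unfolding triangle_count_def S ..
  also have "\<dots> = (\<Sum>p\<in>X \<times> Y \<times> Z. if P p then 1 else 0)"
    using fin by (simp add: sum.If_cases Int_def)
  also have "\<dots> = (\<Sum>x\<in>X. \<Sum>(y,z)\<in>Y \<times> Z. if P (x,y,z) then 1 else 0)"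
    by (simp add: sum.cartesian_product)
  also have "\<dots> = (\<Sum>x\<in>X. \<Sum>y\<in>Y. \<Sum>z\<in>Z. if P (x,y,z) then 1 else 0)"
    by (simp add: sum.cartesian_product)
  also have "\<dots> = (\<Sum>x\<in>X. \<Sum>y\<in>Y. \<Sum>z\<in>Z.
     ee E (fst x) (snd y) * ee E (fst y) (snd z) * ee E (fst z) (snd x))"
    by (intro sum.cong refl) (simp add: P_def ee_def)
  finally show ?thesis .
qed

lemma core:
  fixes \<gamma> \<eta> \<theta> :: real
  assumes sym: "\<forall>u v. E u v \<longrightarrow> E v u"
    and X: "disjoint_pairs n X" and Y: "disjoint_pairs n Y" and Z: "disjoint_pairs n Z"
    and npos: "n > 0" and th: "\<theta> > 0"
    and g0: "0 \<le> \<gamma>" and g2: "\<gamma> \<le> 2" and e0: "0 \<le> \<eta>"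
    and deg: "\<forall>a<n. \<bar>dg E n a - \<gamma> * n\<bar> \<le> \<eta> * n"
    and codeg: "\<forall>a<n. \<forall>b<n. a \<noteq> b \<longrightarrow> \<bar>cdg E n a b - \<gamma>^2 * n\<bar> \<le> \<eta> * n"
  shows "real (triangle_count E X Y Z) \<ge> \<gamma>^3 * card X * card Y * card Z
           - (3*\<theta>*real n^3 + (25*\<eta>*real n^3 + 3*real n^2)/\<theta>)"
proof -
  note dX = dp_facts[OF X] and dY = dp_facts[OF Y] and dZ = dp_facts[OF Z]
  define T where "T u v = (\<Sum>z\<in>Z. ee E u (snd z) * ee E v (fst z))" for u v
  define c where "c = real (card Z)"
  define D where "D u v = T u v - \<gamma>^2 * c" for u v
  define B where "B = snd ` Y"
  define N where "N u = (\<Sum>a\<in>B. ee E a u)" for u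
  have nr: "real n > 0" using npos by simp
  have cB: "card B = card Y" unfolding B_def using dY by (simp add: card_image)
  have Bsub: "B \<subseteq> {..<n}" unfolding B_def using dY by simp
  have c0: "0 \<le> c" "c \<le> n" using dZ by (auto simp: c_def)
  have g4: "\<gamma>^2 \<le> 4" using g0 g2 power_mono[of \<gamma> 2 2] by simp
  have cnt: "real (triangle_count E X Y Z) = (\<Sum>x\<in>X. \<Sum>y\<in>Y. ee E (fst x) (snd y) * T (fst y) (snd x))"
    unfolding count_sum[OF dX(5) dY(5) dZ(5)] T_def
    by (simp add: sum_distrib_left mult_ac ee_sym[OF sym, of "fst _" "snd x" for x])
  have VT: "(\<Sum>u<n. \<Sum>v<n. (D u v)^2) \<le> 29*\<eta>*real n^4 + real n^3"
    unfolding D_def T_def c_def by (rule varT[OF sym Z g0 g2 e0 deg codeg])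
  have errD: "(\<Sum>x\<in>X. \<Sum>y\<in>Y. \<bar>D (fst y) (snd x)\<bar>) \<le> \<theta>*real n^3/2 + (29*\<eta>*real n^3 + real n^2)/(2*\<theta>)"
  proof -
    define h where "h = (\<lambda>(x::nat\<times>nat, y::nat\<times>nat). (fst y, snd x))"
    have inj: "inj_on h (X \<times> Y)"
      unfolding h_def using dX(2) dY(1) by (auto simp: inj_on_def)
    have img: "h ` (X \<times> Y) \<subseteq> {..<n} \<times> {..<n}" unfolding h_def using dX(4) dY(3) by auto
    have "(\<Sum>x\<in>X. \<Sum>y\<in>Y. \<bar>D (fst y) (snd x)\<bar>) = (\<Sum>p\<in>X \<times> Y. \<bar>case_prod D (h p)\<bar>)"
      by (simp add: sum.cartesian_product h_def case_prod_beta)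
    also have "\<dots> = (\<Sum>q\<in>h ` (X \<times> Y). \<bar>case_prod D q\<bar>)"
      using sum.reindex[OF inj, of "\<lambda>q. \<bar>case_prod D q\<bar>"] by simp
    also have "\<dots> \<le> (\<Sum>q\<in>{..<n} \<times> {..<n}. \<bar>case_prod D q\<bar>)"
      by (rule sum_mono2[OF _ img]) auto
    also have "\<dots> \<le> real (card ({..<n} \<times> {..<n})) * (\<theta>*n) / 2 + (\<Sum>q\<in>{..<n} \<times> {..<n}. (case_prod D q)^2) / (2*(\<theta>*n))"
      by (rule sum_abs_amgm) (use th nr in auto)
    also have "(\<Sum>q\<in>{..<n} \<times> {..<n}. (case_prod D q)^2) = (\<Sum>u<n. \<Sum>v<n. (D u v)^2)"
      by (simp add: sum.cartesian_product case_prod_beta)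
    also have "real (card ({..<n} \<times> {..<n})) * (\<theta>*n) / 2 + (\<Sum>u<n. \<Sum>v<n. (D u v)^2) / (2*(\<theta>*n))
       \<le> real n * real n * (\<theta>*n) / 2 + (29*\<eta>*real n^4 + real n^3) / (2*(\<theta>*n))"
      using VT th nr by (simp add: card_cartesian_product divide_right_mono)
    also have "\<dots> = \<theta>*real n^3/2 + (29*\<eta>*real n^3 + real n^2)/(2*\<theta>)"
      using nr th by (simp add: field_simps power3_eq_cube power4_eq_xxxx power2_eq_square)
    finally show ?thesis .
  qed
  have VA: "(\<Sum>u<n. (N u - \<gamma> * card B)^2) \<le> 5*\<eta>*real n^3 + real n^2"
    unfolding N_def by (rule varA[OF sym Bsub g0 g2 e0 deg codeg])
  define P where "P = (\<Sum>x\<in>X. \<Sum>y\<in>Y. ee E (fst x) (snd y))"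
  have PN: "P = (\<Sum>u\<in>fst ` X. N u)"
  proof -
    have "P = (\<Sum>x\<in>X. N (fst x))"
      unfolding P_def N_def B_def
      by (intro sum.cong refl) (simp add: sum.reindex[OF dY(2)] ee_sym[OF sym, of "fst _"])
    also have "\<dots> = (\<Sum>u\<in>fst ` X. N u)" by (simp add: sum.reindex[OF dX(1)])
    finally show ?thesis .
  qed
  have errB: "\<gamma> * card X * card Y - P \<le> \<theta>*real n^2/2 + (5*\<eta>*real n^2 + real n)/(2*\<theta>)"
  proof -
    have "\<gamma> * card X * card Y - P = (\<Sum>u\<in>fst ` X. \<gamma> * card B - N u)"
      using PN cB dX(1) by (simp add: sum_subtractf card_image)
    also have "\<dots> \<le> (\<Sum>u\<in>fst ` X. \<bar>N u - \<gamma> * card B\<bar>)" by (rule sum_mono) auto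
    also have "\<dots> \<le> (\<Sum>u<n. \<bar>N u - \<gamma> * card B\<bar>)"
      by (rule sum_mono2) (use dX(3) in auto)
    also have "\<dots> \<le> real (card {..<n}) * (\<theta>*n) / 2 + (\<Sum>u<n. (N u - \<gamma> * card B)^2) / (2*(\<theta>*n))"
      by (rule sum_abs_amgm) (use th nr in auto)
    also have "\<dots> \<le> real n * (\<theta>*n) / 2 + (5*\<eta>*real n^3 + real n^2) / (2*(\<theta>*n))"
      using VA th nr by (simp add: divide_right_mono)
    also have "\<dots> = \<theta>*real n^2/2 + (5*\<eta>*real n^2 + real n)/(2*\<theta>)"
      using nr th by (simp add: field_simps power3_eq_cube power2_eq_square)
    finally show ?thesis .
  qed
  have C0: "real (triangle_count E X Y Z) \<ge> (\<Sum>x\<in>X. \<Sum>y\<in>Y. ee E (fst x) (snd y) * (\<gamma>^2*c) - \<bar>D (fst y) (snd x)\<bar>)"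
    unfolding cnt
  proof (intro sum_mono)
    fix x y
    have "ee E (fst x) (snd y) * D (fst y) (snd x) \<ge> - \<bar>D (fst y) (snd x)\<bar>"
    proof -
      have "\<bar>ee E (fst x) (snd y) * D (fst y) (snd x)\<bar> \<le> \<bar>D (fst y) (snd x)\<bar>"
        by (simp add: abs_mult mult_left_le_one_le)
      thus ?thesis by linarith
    qed
    thus "ee E (fst x) (snd y) * (\<gamma>^2*c) - \<bar>D (fst y) (snd x)\<bar> \<le> ee E (fst x) (snd y) * T (fst y) (snd x)"
      by (simp add: D_def algebra_simps)
  qed
  have C0': "(\<Sum>x\<in>X. \<Sum>y\<in>Y. ee E (fst x) (snd y) * (\<gamma>^2*c) - \<bar>D (fst y) (snd x)\<bar>) = \<gamma>^2*c*P - (\<Sum>x\<in>X. \<Sum>y\<in>Y. \<bar>D (fst y) (snd x)\<bar>)"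
    by (simp add: P_def sum_subtractf sum_distrib_left sum_distrib_right mult_ac)
  have C1: "real (triangle_count E X Y Z) \<ge> \<gamma>^2*c*P - (\<theta>*real n^3/2 + (29*\<eta>*real n^3 + real n^2)/(2*\<theta>))"
    using errD C0 C0' by linarith
  define eB where "eB = \<theta>*real n^2/2 + (5*\<eta>*real n^2 + real n)/(2*\<theta>)"
  have eB0: "0 \<le> eB" unfolding eB_def using th e0 by simp
  have "\<gamma>^2*c*P \<ge> \<gamma>^2*c*(\<gamma> * card X * card Y - eB)"
    using errB g0 c0 by (intro mult_left_mono) (auto simp: eB_def)
  moreover have "\<gamma>^2*c*eB \<le> 4*n*eB"
    using g4 c0 eB0 g0 by (intro mult_right_mono) (auto intro: mult_mono)
  ultimately have C2: "\<gamma>^2*c*P \<ge> \<gamma>^3 * card X * card Y * card Z - 4*n*eB"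
    by (simp add: algebra_simps c_def power3_eq_cube power2_eq_square)
  have C3: "4*n*eB + (\<theta>*real n^3/2 + (29*\<eta>*real n^3 + real n^2)/(2*\<theta>))
      \<le> 3*\<theta>*real n^3 + (25*\<eta>*real n^3 + 3*real n^2)/\<theta>"
  proof -
    have "4*n*eB + (\<theta>*real n^3/2 + (29*\<eta>*real n^3 + real n^2)/(2*\<theta>))
       = 5/2*\<theta>*real n^3 + (49/2*\<eta>*real n^3 + 5/2*real n^2)/\<theta>"
      unfolding eB_def using th by (simp add: field_simps power3_eq_cube power2_eq_square)
    also have "\<dots> \<le> 3*\<theta>*real n^3 + (25*\<eta>*real n^3 + 3*real n^2)/\<theta>"
      using th e0 nr by (intro add_mono divide_right_mono) auto
    finally show ?thesis .
  qed
  show ?thesis using C1 C2 C3 by linarith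
qed

lemma card_nbhd1: "real (card (common_nbhd n E {a})) = dg E n a"
proof -
  have "common_nbhd n E {a} = {v \<in> {..<n}. E a v}" by (auto simp: common_nbhd_def)
  hence "real (card (common_nbhd n E {a})) = (\<Sum>v<n. if E a v then 1 else 0)"
    by (simp add: sum.If_cases Int_def)
  thus ?thesis by (simp add: dg_def ee_def)
qed

lemma card_nbhd2: "real (card (common_nbhd n E {a, b})) = cdg E n a b"
proof -
  have "common_nbhd n E {a, b} = {v \<in> {..<n}. E a v \<and> E b v}" by (auto simp: common_nbhd_def)
  hence "real (card (common_nbhd n E {a, b})) = (\<Sum>v<n. if E a v \<and> E b v then 1 else 0)"
    by (simp add: sum.If_cases Int_def)
  thus ?thesis by (auto simp: cdg_def ee_def intro!: sum.cong)
qed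

lemma per_n:
  fixes \<delta> :: real
  assumes gr: "simple_graph n E" and q: "quasirandom n E e 2"
    and X: "disjoint_pairs n X" and Y: "disjoint_pairs n Y" and Z: "disjoint_pairs n Z"
    and d: "\<delta> > 0" and n1: "72/\<delta>^2 \<le> real n" and npos: "n > 0"
    and e1: "\<bar>e\<bar> \<le> 1/2" and e2: "\<bar>e\<bar> \<le> \<delta>^2/2400"
  shows "real (triangle_count E X Y Z) \<ge>
      density n E ^ 3 * real (card X) * real (card Y) * real (card Z) / 8 - \<delta> * real n ^ 3"
proof -
  define \<gamma> where "\<gamma> = density n E"
  define \<eta> where "\<eta> = 4*\<bar>e\<bar>"
  define \<theta> where "\<theta> = \<delta>/6"
  have sym: "\<forall>u v. E u v \<longrightarrow> E v u" using gr by (simp add: simple_graph_def)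
  have g0: "0 \<le> \<gamma>" by (simp add: \<gamma>_def density_def)
  have nr: "real n > 0" using npos by simp
  have D1: "\<And>a. a < n \<Longrightarrow> (1 - e) * \<gamma> * n \<le> dg E n a \<and> dg E n a \<le> (1 + e) * \<gamma> * n"
  proof -
    fix a assume "a < n"
    hence "{a} \<subseteq> {..<n}" "card {a} \<le> 2" by auto
    hence "(1 - e) * \<gamma> ^ card {a} * n \<le> real (card (common_nbhd n E {a})) \<and>
        real (card (common_nbhd n E {a})) \<le> (1 + e) * \<gamma> ^ card {a} * n"
      using q unfolding quasirandom_def \<gamma>_def by blast
    thus "(1 - e) * \<gamma> * n \<le> dg E n a \<and> dg E n a \<le> (1 + e) * \<gamma> * n"
      by (simp add: card_nbhd1)
  qed
  have D2: "\<And>a b. a < n \<Longrightarrow> b < n \<Longrightarrow> a \<noteq> b \<Longrightarrow>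
      (1 - e) * \<gamma>^2 * n \<le> cdg E n a b \<and> cdg E n a b \<le> (1 + e) * \<gamma>^2 * n"
  proof -
    fix a b assume ab: "a < n" "b < n" "a \<noteq> b"
    have c2: "card {a, b} = 2" using ab by auto
    have "{a, b} \<subseteq> {..<n}" "card {a, b} \<le> 2" using ab by auto
    hence "(1 - e) * \<gamma> ^ card {a, b} * n \<le> real (card (common_nbhd n E {a, b})) \<and>
        real (card (common_nbhd n E {a, b})) \<le> (1 + e) * \<gamma> ^ card {a, b} * n"
      using q unfolding quasirandom_def \<gamma>_def by blast
    thus "(1 - e) * \<gamma>^2 * n \<le> cdg E n a b \<and> cdg E n a b \<le> (1 + e) * \<gamma>^2 * n"
      by (simp only: c2 card_nbhd2)
  qed
  have g2: "\<gamma> \<le> 2"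
  proof -
    have "(1 - e) * \<gamma> * n \<le> n" using D1[OF npos] dg_le[of E n 0] by linarith
    moreover have "(1/2) * \<gamma> * n \<le> (1 - e) * \<gamma> * n"
      using e1 g0 nr by (intro mult_right_mono) (auto simp: abs_le_iff)
    ultimately have "\<gamma> * n \<le> 2 * n" by linarith
    thus ?thesis using nr by simp
  qed
  have g4: "\<gamma>^2 \<le> 4" using g0 g2 power_mono[of \<gamma> 2 2] by simp
  have e0: "0 \<le> \<eta>" by (simp add: \<eta>_def)
  have deg: "\<forall>a<n. \<bar>dg E n a - \<gamma> * n\<bar> \<le> \<eta> * n"
  proof (intro allI impI)
    fix a assume a: "a < n"
    have "\<bar>dg E n a - \<gamma> * n\<bar> \<le> \<bar>e\<bar> * \<gamma> * n"
    proof -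
      have ee1: "-\<bar>e\<bar> \<le> e" "e \<le> \<bar>e\<bar>" by auto
      have "0 \<le> \<gamma> * n" using g0 by simp
      hence "(-\<bar>e\<bar>) * (\<gamma> * n) \<le> e * (\<gamma> * n)" "e * (\<gamma> * n) \<le> \<bar>e\<bar> * (\<gamma> * n)"
        using ee1 by (intro mult_right_mono; simp)+
      thus ?thesis using D1[OF a] by (simp add: abs_le_iff algebra_simps)
    qed
    also have "\<dots> \<le> \<eta> * n" unfolding \<eta>_def using g2 g0 nr
      by (intro mult_right_mono) (use mult_left_mono[of \<gamma> 4 "\<bar>e\<bar>"] in auto)
    finally show "\<bar>dg E n a - \<gamma> * n\<bar> \<le> \<eta> * n" .
  qed
  have codeg: "\<forall>a<n. \<forall>b<n. a \<noteq> b \<longrightarrow> \<bar>cdg E n a b - \<gamma>^2 * n\<bar> \<le> \<eta> * n"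
  proof (intro allI impI)
    fix a b assume a: "a < n" "b < n" "a \<noteq> b"
    have "\<bar>cdg E n a b - \<gamma>^2 * n\<bar> \<le> \<bar>e\<bar> * \<gamma>^2 * n"
    proof -
      have ee1: "-\<bar>e\<bar> \<le> e" "e \<le> \<bar>e\<bar>" by auto
      have "0 \<le> \<gamma>^2 * n" using g0 by simp
      hence "(-\<bar>e\<bar>) * (\<gamma>^2 * n) \<le> e * (\<gamma>^2 * n)" "e * (\<gamma>^2 * n) \<le> \<bar>e\<bar> * (\<gamma>^2 * n)"
        using ee1 by (intro mult_right_mono; simp)+
      thus ?thesis using D2[OF a] by (simp add: abs_le_iff algebra_simps)
    qed
    also have "\<dots> \<le> \<eta> * n" unfolding \<eta>_def using g4 nr
      by (intro mult_right_mono) (use mult_left_mono[of "\<gamma>^2" 4 "\<bar>e\<bar>"] in auto)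
    finally show "\<bar>cdg E n a b - \<gamma>^2 * n\<bar> \<le> \<eta> * n" .
  qed
  have th: "\<theta> > 0" using d by (simp add: \<theta>_def)
  have C: "real (triangle_count E X Y Z) \<ge> \<gamma>^3 * card X * card Y * card Z
           - (3*\<theta>*real n^3 + (25*\<eta>*real n^3 + 3*real n^2)/\<theta>)"
    by (rule core[OF sym X Y Z npos th g0 g2 e0 deg codeg])
  have E1: "25*\<eta> \<le> \<delta>^2/24" using e2 by (simp add: \<eta>_def)
  have E2: "3 * real n^2 \<le> \<delta>^2/24 * real n^3"
  proof -
    have "72 \<le> \<delta>^2 * n" using n1 d by (simp add: field_simps)
    hence "72 * real n^2 \<le> \<delta>^2 * n * real n^2" using nr by (intro mult_right_mono) auto
    hence "3 * real n^2 * 24 \<le> \<delta>^2 * n * real n^2" by simp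
    thus ?thesis by (simp add: power2_eq_square power3_eq_cube algebra_simps)
  qed
  have "25*\<eta>*real n^3 + 3*real n^2 \<le> \<delta>^2/12 * real n^3"
    using E2 mult_right_mono[OF E1, of "real n^3"] by simp
  hence "(25*\<eta>*real n^3 + 3*real n^2)/\<theta> \<le> (\<delta>^2/12 * real n^3)/\<theta>"
    by (rule divide_right_mono) (use th in simp)
  also have "\<dots> = \<delta>/2 * real n^3" using d by (simp add: \<theta>_def field_simps power2_eq_square)
  finally have E4: "(25*\<eta>*real n^3 + 3*real n^2)/\<theta> \<le> \<delta>/2 * real n^3" .
  have "3*\<theta>*real n^3 = \<delta>/2*real n^3" by (simp add: \<theta>_def)
  hence E3: "3*\<theta>*real n^3 + (25*\<eta>*real n^3 + 3*real n^2)/\<theta> \<le> \<delta> * real n^3"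
    using E4 by linarith
  have "0 \<le> \<gamma>^3 * card X * card Y * card Z" using g0 by simp
  thus ?thesis using C E3 by (simp add: \<gamma>_def)
qed


theorem lemma5p7:
  fixes G :: "nat \<Rightarrow> nat \<Rightarrow> nat \<Rightarrow> bool"
    and eps :: "nat \<Rightarrow> real"
    and X Y Z :: "nat \<Rightarrow> (nat \<times> nat) set"
  assumes graph: "\<forall>n. simple_graph n (G n)"
    and qr: "\<forall>n. quasirandom n (G n) (eps n) 2"
    and eps_lim: "eps \<longlonglongrightarrow> 0"
    and dens_lo: "\<exists>c>0. \<forall>\<^sub>F n in sequentially. density n (G n) \<ge> c"
    and dens_hi: "\<exists>c>0. \<forall>\<^sub>F n in sequentially. 1 - density n (G n) \<ge> c"
    and XYZ: "\<forall>n. disjoint_pairs n (X n) \<and> disjoint_pairs n (Y n) \<and> disjoint_pairs n (Z n)"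
    and X_big: "\<exists>c>0. \<forall>\<^sub>F n in sequentially. real (card (X n)) \<ge> c * real n"
    and Y_big: "\<exists>c>0. \<forall>\<^sub>F n in sequentially. real (card (Y n)) \<ge> c * real n"
    and Z_big: "\<exists>c>0. \<forall>\<^sub>F n in sequentially. real (card (Z n)) \<ge> c * real n"
  shows "\<forall>\<delta>>0. \<forall>\<^sub>F n in sequentially.
           real (triangle_count (G n) (X n) (Y n) (Z n)) \<ge>
             density n (G n) ^ 3 * real (card (X n)) * real (card (Y n)) * real (card (Z n)) / 8
             - \<delta> * real n ^ 3"
proof (intro allI impI)
  fix \<delta> :: real assume d: "\<delta> > 0"
  define r where "r = min (1/2) (\<delta>^2/2400)"
  have r0: "r > 0" using d by (simp add: r_def)
  have ev1: "\<forall>\<^sub>F n in sequentially. dist (eps n) 0 < r" using tendstoD[OF eps_lim r0] .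
  have ev2: "\<forall>\<^sub>F n in sequentially. n \<ge> nat \<lceil>72/\<delta>^2\<rceil> + 1" by (rule eventually_ge_at_top)
  show "\<forall>\<^sub>F n in sequentially.
           real (triangle_count (G n) (X n) (Y n) (Z n)) \<ge>
             density n (G n) ^ 3 * real (card (X n)) * real (card (Y n)) * real (card (Z n)) / 8
             - \<delta> * real n ^ 3"
    using ev1 ev2
  proof eventually_elim
    case (elim n)
    have n1: "72/\<delta>^2 \<le> real n" using elim(2) by linarith
    have npos: "n > 0" using elim(2) by simp
    have e: "\<bar>eps n\<bar> \<le> 1/2" "\<bar>eps n\<bar> \<le> \<delta>^2/2400" using elim(1) by (auto simp: r_def dist_real_def)
    show ?case
      by (rule per_n[OF graph[rule_format] qr[rule_format] _ _ _ d n1 npos e])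
         (use XYZ in auto)
  qed
qed

end
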